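(* Let $\mathsf k_1,\mathsf k_2,\mathsf k_3$ be nonzero, and let $(\{\lambda_j\}_{j\le L},\{\mu_h\}_{h\le M})$ be a solution of the Bethe equations satisfying $\lambda_l\ne\lambda_m$, $\mu_p\ne\mu_q$, $\mu_q\ne\lambda_m$ for all $l\ne m$, $p\ne q$, and $\{\mu_h\}\cap\{\xi_n\}=\emptyset$. Let $t_1(\lambda)=t_1(\lambda|\{\lambda_j\},\{\mu_h\})$, set $x_a=t_1(\xi_a)$ and let $t_n(\lambda)=t_n(\lambda|\{x_a\})$, $n\ge2$, be the interpolation polynomials. Then $$t_2(\lambda)=\Lambda_1(\lambda)\big(\mathsf k_1t_1(\lambda+\eta)+\mathsf k_2\mathsf k_3d(\lambda)\big)/\mathsf k_1=\Lambda_1(\lambda)\big(\Lambda_1(\lambda+\eta)-\Lambda_2(\lambda+\eta)-\Lambda_3(\lambda+\eta)+\mathsf k_2\mathsf k_3d(\lambda)/\mathsf k_1\big),$$ and $t_{n+1}(\lambda)=\Lambda_1(\lambda)\,t_n(\lambda+\eta)$ for all $n\ge2$.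
   Context: Fix a nonzero complex number $\eta$, an integer $\mathsf N\ge1$ and complex inhomogeneities $\xi_1,\dots,\xi_{\mathsf N}$ with $\xi_a-\xi_b\notin\eta\mathbb Z$ for $a\ne b$. This concerns the fundamental $gl_{1|2}$ model with diagonal twist $K=\operatorname{diag}(\mathsf k_1,\mathsf k_2,\mathsf k_3)$. Write $d(\lambda)=\prod_{n=1}^{\mathsf N}(\lambda-\xi_n)$, $a(\lambda)=d(\lambda+\eta)$, and $f^{(m)}_a(\lambda)=\prod_{b\ne a}\frac{\lambda-\xi_b}{\xi_a-\xi_b}\prod_{b=1}^{\mathsf N}\prod_{r=1}^{m-1}\frac{1}{\xi_a-\xi_b+r\eta}$. Let $T_{\infty,1}=\mathsf k_1-\mathsf k_2-\mathsf k_3$ and $T_{\infty,n}=\mathsf k_1^{n-2}(\mathsf k_1-\mathsf k_2)(\mathsf k_1-\mathsf k_3)$ for $n\ge2$. Interpolation polynomials in unknowns $\{x_a\}$: $t_1(\lambda|\{x_a\})=T_{\infty,1}d(\lambda)+\sum_af^{(1)}_a(\lambda)x_a$ and, for $n\ge1$, $t_{n+1}(\lambda|\{x_a\})=\prod_{r=1}^nd(\lambda+r\eta)\big[T_{\infty,n+1}d(\lambda)+\sum_af^{(n+1)}_a(\lambda)t_n(\xi_a+\eta|\{x_a\})x_a\big]$. Bethe Ansatz: $Q_1(\lambda)=\prod_{l=1}^L(\lambda-\lambda_l)$, $Q_2(\lambda)=\prod_{m=1}^M(\lambda-\mu_m)$; Bethe equations: $\mathsf k_1Q_2(\lambda_j)a(\lambda_j)=\mathsf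 k_2d(\lambda_j)Q_2(\lambda_j+\eta)$ ($j\le L$) and $\mathsf k_2Q_2(\mu_j+\eta)Q_1(\mu_j-\eta)=-\mathsf k_3Q_2(\mu_j-\eta)Q_1(\mu_j)$ ($j\le M$). Define $\Lambda_1(\lambda)=\mathsf k_1a(\lambda)\frac{Q_1(\lambda-\eta)}{Q_1(\lambda)}$, $\Lambda_2(\lambda)=\mathsf k_2d(\lambda)\frac{Q_1(\lambda-\eta)Q_2(\lambda+\eta)}{Q_1(\lambda)Q_2(\lambda)}$, $\Lambda_3(\lambda)=\mathsf k_3d(\lambda)\frac{Q_2(\lambda-\eta)}{Q_2(\lambda)}$, and $t_1(\lambda|\{\lambda_j\},\{\mu_h\})=\Lambda_1(\lambda)-\Lambda_2(\lambda)-\Lambda_3(\lambda)$. *)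

theory Defs
  imports Complex_Main
begin

text \<open>Inhomogeneities are indexed by 1..N; Bethe roots by 1..L and 1..M.\<close>

definition dpol :: "nat \<Rightarrow> (nat \<Rightarrow> complex) \<Rightarrow> complex \<Rightarrow> complex" where
  "dpol N \<xi> z = (\<Prod>n\<in>{1..N}. (z - \<xi> n))"

definition apol :: "complex \<Rightarrow> nat \<Rightarrow> (nat \<Rightarrow> complex) \<Rightarrow> complex \<Rightarrow> complex" where
  "apol \<eta> N \<xi> z = dpol N \<xi> (z + \<eta>)"

definition fint :: "complex \<Rightarrow> nat \<Rightarrow> (nat \<Rightarrow> complex) \<Rightarrow> nat \<Rightarrow> nat \<Rightarrow> complex \<Rightarrow> complex" where
  "fint \<eta> N \<xi> m a z =
     (\<Prod>b\<in>{1..N} - {a}. (z - \<xi> b) / (\<xi> a - \<xi> b)) *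
     (\<Prod>b\<in>{1..N}. \<Prod>r\<in>{1..<m}. 1 / (\<xi> a - \<xi> b + of_nat r * \<eta>))"

text \<open>T_{\<infinity>,n}; only used for n \<ge> 1.\<close>
definition Tinf :: "complex \<Rightarrow> complex \<Rightarrow> complex \<Rightarrow> nat \<Rightarrow> complex" where
  "Tinf k1 k2 k3 n = (if n = 1 then k1 - k2 - k3 else k1 ^ (n - 2) * (k1 - k2) * (k1 - k3))"

text \<open>Interpolation polynomials t_n(z | {x_a}), n \<ge> 1 (the value at n = 0 is an unused dummy).\<close>
fun tint :: "complex \<Rightarrow> nat \<Rightarrow> (nat \<Rightarrow> complex) \<Rightarrow> complex \<Rightarrow> complex \<Rightarrow> complex
             \<Rightarrow> (nat \<Rightarrow> complex) \<Rightarrow> nat \<Rightarrow> complex \<Rightarrow> complex" where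
  "tint \<eta> N \<xi> k1 k2 k3 x 0 z = 0"
| "tint \<eta> N \<xi> k1 k2 k3 x (Suc 0) z =
     Tinf k1 k2 k3 1 * dpol N \<xi> z + (\<Sum>a\<in>{1..N}. fint \<eta> N \<xi> 1 a z * x a)"
| "tint \<eta> N \<xi> k1 k2 k3 x (Suc (Suc n)) z =
     (\<Prod>r\<in>{1..Suc n}. dpol N \<xi> (z + of_nat r * \<eta>)) *
     (Tinf k1 k2 k3 (Suc (Suc n)) * dpol N \<xi> z +
      (\<Sum>a\<in>{1..N}. fint \<eta> N \<xi> (Suc (Suc n)) a z * tint \<eta> N \<xi> k1 k2 k3 x (Suc n) (\<xi> a + \<eta>) * x a))"

definition Qpol :: "nat \<Rightarrow> (nat \<Rightarrow> complex) \<Rightarrow> complex \<Rightarrow> complex" where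
  "Qpol L r z = (\<Prod>l\<in>{1..L}. (z - r l))"

definition Lam1 :: "complex \<Rightarrow> nat \<Rightarrow> (nat \<Rightarrow> complex) \<Rightarrow> complex \<Rightarrow> nat \<Rightarrow> (nat \<Rightarrow> complex) \<Rightarrow> complex \<Rightarrow> complex" where
  "Lam1 \<eta> N \<xi> k1 L lam z = k1 * apol \<eta> N \<xi> z * Qpol L lam (z - \<eta>) / Qpol L lam z"

definition Lam2 :: "complex \<Rightarrow> nat \<Rightarrow> (nat \<Rightarrow> complex) \<Rightarrow> complex \<Rightarrow> nat \<Rightarrow> (nat \<Rightarrow> complex)
                    \<Rightarrow> nat \<Rightarrow> (nat \<Rightarrow> complex) \<Rightarrow> complex \<Rightarrow> complex" where
  "Lam2 \<eta> N \<xi> k2 L lam M mu z = k2 * dpol N \<xi> z *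
     (Qpol L lam (z - \<eta>) * Qpol M mu (z + \<eta>)) / (Qpol L lam z * Qpol M mu z)"

definition Lam3 :: "complex \<Rightarrow> nat \<Rightarrow> (nat \<Rightarrow> complex) \<Rightarrow> complex \<Rightarrow> nat \<Rightarrow> (nat \<Rightarrow> complex) \<Rightarrow> complex \<Rightarrow> complex" where
  "Lam3 \<eta> N \<xi> k3 M mu z = k3 * dpol N \<xi> z * Qpol M mu (z - \<eta>) / Qpol M mu z"

definition t1Bethe :: "complex \<Rightarrow> nat \<Rightarrow> (nat \<Rightarrow> complex) \<Rightarrow> complex \<Rightarrow> complex \<Rightarrow> complex
                       \<Rightarrow> nat \<Rightarrow> (nat \<Rightarrow> complex) \<Rightarrow> nat \<Rightarrow> (nat \<Rightarrow> complex) \<Rightarrow> complex \<Rightarrow> complex" where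
  "t1Bethe \<eta> N \<xi> k1 k2 k3 L lam M mu z =
     Lam1 \<eta> N \<xi> k1 L lam z - Lam2 \<eta> N \<xi> k2 L lam M mu z - Lam3 \<eta> N \<xi> k3 M mu z"

end

theory Submission
  imports Defs "HOL-Computational_Algebra.Polynomial"
begin

definition dc :: "complex poly \<Rightarrow> nat \<Rightarrow> complex \<Rightarrow> bool" where
  "dc p D c \<longleftrightarrow> degree p \<le> D \<and> coeff p D = c"

lemma dc_mult: assumes "dc p D c" "dc q E e" shows "dc (p*q) (D+E) (c*e)"
proof -
  have d: "degree (p*q) \<le> D + E"
    using assms degree_mult_le[of p q] unfolding dc_def by linarith
  show ?thesis
  proof (cases "degree p = D \<and> degree q = E")
    case True
    then show ?thesis using assms d unfolding dc_def
      by (metis coeff_mult_degree_sum)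
  next
    case False
    then have "c * e = 0" using assms unfolding dc_def
      by (metis coeff_eq_0 le_neq_implies_less mult_eq_0_iff)
    moreover have "degree (p*q) < D + E"
      using False assms degree_mult_le[of p q] unfolding dc_def by linarith
    ultimately show ?thesis unfolding dc_def using coeff_eq_0 by fastforce
  qed
qed

lemma dc_add: "dc p D c \<Longrightarrow> dc q D e \<Longrightarrow> dc (p+q) D (c+e)"
  unfolding dc_def by (simp add: degree_add_le)

lemma dc_diff: "dc p D c \<Longrightarrow> dc q D e \<Longrightarrow> dc (p-q) D (c-e)"
  unfolding dc_def by (simp add: degree_diff_le)

lemma dc_smult: "dc p D c \<Longrightarrow> dc (smult a p) D (a*c)"
  unfolding dc_def by simp

lemma dc_lower: "degree p < D \<Longrightarrow> dc p D 0"
  unfolding dc_def by (simp add: coeff_eq_0)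

lemma dc_lin: "dc [:s,1:] 1 1"
  unfolding dc_def by simp

lemma dc_one: "dc 1 0 1"
  unfolding dc_def by simp

lemma dc_prod: "finite S \<Longrightarrow> dc (\<Prod>i\<in>S. [:g i,1:]) (card S) 1"
proof (induction S rule: finite_induct)
  case empty then show ?case by (simp add: dc_one)
next
  case (insert x F)
  then show ?case using dc_mult[OF dc_lin insert.IH] by simp
qed

lemma dc_exact: "dc p D c \<Longrightarrow> c \<noteq> 0 \<Longrightarrow> degree p = D"
  unfolding dc_def by (metis le_antisym le_degree)

lemma dc_pcomp: assumes "dc p D c" shows "dc (pcompose p [:s,1:]) D c"
proof (cases "degree p = D")
  case True
  have "lead_coeff (pcompose p [:s,1:]) = lead_coeff p * 1 ^ degree p"
    by (subst lead_coeff_comp) auto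
  then show ?thesis using assms True unfolding dc_def by (simp add: degree_pcompose)
next
  case False
  then have "degree p < D" using assms unfolding dc_def by simp
  then show ?thesis using assms unfolding dc_def by (simp add: degree_pcompose coeff_eq_0)
qed

lemma dc_cancel:
  assumes "Q * X = Y" "dc Q D 1" "dc Y K c" "dc Q' D 1"
  shows "dc (Q' * X) K c"
proof (cases "X = 0")
  case True
  then show ?thesis using assms unfolding dc_def by auto
next
  case False
  have dQ: "degree Q = D" "degree Q' = D" using assms dc_exact by auto
  have Q0: "Q \<noteq> 0" "Q' \<noteq> 0" using assms unfolding dc_def by auto
  have dY: "degree Y = D + degree X" using assms(1) dQ Q0 False by (metis degree_mult_eq)
  have dY': "degree (Q'*X) = D + degree X" using dQ Q0 False by (metis degree_mult_eq)
  show ?thesis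
  proof (cases "D + degree X = K")
    case True
    have "coeff Y K = coeff X (degree X)" using assms(1,2) dQ True
      by (metis coeff_mult_degree_sum dc_def mult_1)
    moreover have "coeff (Q'*X) K = coeff X (degree X)" using assms(4) dQ True
      by (metis coeff_mult_degree_sum dc_def mult_1)
    ultimately show ?thesis using assms(3) dY' True unfolding dc_def by simp
  next
    case False
    then have "D + degree X < K" using assms(3) dY unfolding dc_def by simp
    then show ?thesis using assms(3) dY dY' unfolding dc_def by (simp add: coeff_eq_0)
  qed
qed

lemma roots_dvd:
  "finite S \<Longrightarrow> (\<And>s. s \<in> S \<Longrightarrow> poly (p::complex poly) s = 0) \<Longrightarrow> (\<Prod>s\<in>S. [:-s,1:]) dvd p"
proof (induction S arbitrary: p rule: finite_induct)
  case empty then show ?case by simp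
next
  case (insert x F)
  have "poly p x = 0" using insert.prems by simp
  then have "[:-x,1:] dvd p" using poly_eq_0_iff_dvd[of p x] by simp
  then obtain q where q: "p = [:-x,1:] * q" by (elim dvdE)
  have "poly q t = 0" if "t \<in> F" for t
  proof -
    have "t \<noteq> x" using that insert.hyps by auto
    moreover have "poly p t = 0" using insert.prems that by auto
    ultimately show ?thesis using q by simp
  qed
  then have "(\<Prod>s\<in>F. [:-s,1:]) dvd q" using insert.IH by blast
  then have "[:-x,1:] * (\<Prod>s\<in>F. [:-s,1:]) dvd p" unfolding q by (rule mult_dvd_mono[OF dvd_refl])
  then show ?case using insert.hyps by (metis prod.insert)
qed

lemma dc_sum: "finite A \<Longrightarrow> (\<And>a. a \<in> A \<Longrightarrow> dc (f a) D (c a)) \<Longrightarrow> dc (sum f A) D (sum c A)"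
proof (induction A rule: finite_induct)
  case empty then show ?case unfolding dc_def by simp
next
  case (insert x F) then show ?case by (simp add: dc_add)
qed

lemma poly_dP: "poly (\<Prod>n\<in>{1..N}. [:-\<xi> n,1:]) z = dpol N \<xi> z"
  unfolding dpol_def by (simp add: poly_prod)

lemma lagrange:
  fixes \<xi> :: "nat \<Rightarrow> complex"
  assumes N: "N \<ge> 1" and inj: "inj_on \<xi> {1..N}" and B: "dc B N T"
  shows "poly B z = T * dpol N \<xi> z + (\<Sum>a\<in>{1..N}. (\<Prod>b\<in>{1..N}-{a}. (z - \<xi> b)/(\<xi> a - \<xi> b)) * poly B (\<xi> a))"
proof -
  define lb where "lb a = smult (1/(\<Prod>b\<in>{1..N}-{a}. (\<xi> a - \<xi> b))) (\<Prod>b\<in>{1..N}-{a}. [:-\<xi> b,1:])" for a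
  define dP where "dP = (\<Prod>n\<in>{1..N}. [:-\<xi> n,1:])"
  define D where "D = B - smult T dP - (\<Sum>a\<in>{1..N}. smult (poly B (\<xi> a)) (lb a))"
  have pl: "poly (lb a) w = (\<Prod>b\<in>{1..N}-{a}. (w - \<xi> b)/(\<xi> a - \<xi> b))" for a w
    unfolding lb_def by (simp add: poly_prod prod_dividef)
  have dcdP: "dc dP N 1" unfolding dP_def using dc_prod[of "{1..N}" "\<lambda>n. -\<xi> n"] by simp
  have dcl: "dc (lb a) N 0" if "a \<in> {1..N}" for a
  proof -
    have "degree (\<Prod>b\<in>{1..N}-{a}. [:-\<xi> b,1:]) \<le> card ({1..N}-{a})"
      using dc_prod[of "{1..N}-{a}" "\<lambda>n. -\<xi> n"] unfolding dc_def by simp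
    moreover have "card ({1..N}-{a}) < N" using that N by simp
    ultimately show ?thesis unfolding lb_def
      by (intro dc_lower) (meson degree_smult_le le_less_trans)
  qed
  have "dc D N (T - T*1 - (\<Sum>a\<in>{1..N}. poly B (\<xi> a) * 0))"
    unfolding D_def
    by (intro dc_diff dc_smult B dcdP dc_sum) (auto intro: dc_smult dcl)
  then have dcD: "dc D N 0" by simp
  have lval: "poly (lb a) (\<xi> b) = (if a = b then 1 else 0)" if "a \<in> {1..N}" "b \<in> {1..N}" for a b
  proof (cases "a = b")
    case True
    have c1: "(\<xi> a - \<xi> c)/(\<xi> a - \<xi> c) = 1" if c: "c \<in> {1..N}-{a}" for c
    proof -
      have "\<xi> a \<noteq> \<xi> c"
      proof
        assume "\<xi> a = \<xi> c"
        then have "a = c" using inj_onD[OF inj] c \<open>a \<in> {1..N}\<close> by blast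
        then show False using c by blast
      qed
      then show ?thesis by simp
    qed
    have "(\<Prod>c\<in>{1..N}-{a}. (\<xi> a - \<xi> c)/(\<xi> a - \<xi> c)) = 1" by (rule prod.neutral) (use c1 in blast)
    then show ?thesis using True pl[of a "\<xi> a"] by simp
  next
    case False
    have bin: "b \<in> {1..N}-{a}" using False that by blast
    have "(\<Prod>c\<in>{1..N}-{a}. (\<xi> b - \<xi> c)/(\<xi> a - \<xi> c)) = 0"
      by (rule prod_zero) (use bin in \<open>auto intro!: bexI[of _ b]\<close>)
    then show ?thesis using False pl[of a "\<xi> b"] by simp
  qed
  have Droot: "poly D (\<xi> b) = 0" if "b \<in> {1..N}" for b
  proof -
    have "(\<Sum>a\<in>{1..N}. poly B (\<xi> a) * poly (lb a) (\<xi> b)) = (\<Sum>a\<in>{1..N}. if a = b then poly B (\<xi> b) else 0)"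
      using that lval by (intro sum.cong) auto
    also have "\<dots> = poly B (\<xi> b)" using that by simp
    finally have s: "(\<Sum>a\<in>{1..N}. poly B (\<xi> a) * poly (lb a) (\<xi> b)) = poly B (\<xi> b)" .
    have "poly dP (\<xi> b) = 0" unfolding dP_def poly_dP dpol_def
      by (rule prod_zero) (use that in \<open>auto intro!: bexI[of _ b]\<close>)
    then show ?thesis unfolding D_def using s by (simp add: poly_sum)
  qed
  have "dP = (\<Prod>s\<in>\<xi> ` {1..N}. [:-s,1:])" unfolding dP_def using prod.reindex[OF inj, of "\<lambda>s. [:-s,1:]"] by simp
  moreover have "(\<Prod>s\<in>\<xi> ` {1..N}. [:-s,1:]) dvd D"
    by (rule roots_dvd) (use Droot in auto)
  ultimately have "dP dvd D" by simp
  have "D = 0"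
  proof (rule ccontr)
    assume "D \<noteq> 0"
    then have "degree dP \<le> degree D" using \<open>dP dvd D\<close> by (simp add: dvd_imp_degree_le)
    then have "degree D = N" using dc_exact[OF dcdP] dcD unfolding dc_def by simp
    then show False using dcD \<open>D \<noteq> 0\<close> unfolding dc_def by (metis leading_coeff_0_iff)
  qed
  then have "poly D z = 0" by simp
  then show ?thesis unfolding D_def dP_def poly_diff poly_smult poly_sum poly_dP pl by (simp add: mult.commute diff_eq_eq add.commute)
qed

lemma dc_div:
  assumes "Q * X = Y" "dc Q D 1" "dc Y (D+K) c"
  shows "dc X K c"
proof (cases "X = 0")
  case True
  then show ?thesis using assms unfolding dc_def by auto
next
  case False
  have dQ: "degree Q = D" using assms dc_exact by auto
  have Q0: "Q \<noteq> 0" using assms unfolding dc_def by auto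
  have dY: "degree Y = D + degree X" using assms(1) dQ Q0 False by (metis degree_mult_eq)
  show ?thesis
  proof (cases "degree X = K")
    case True
    have "coeff Y (D+K) = coeff X (degree X)" using assms(1,2) dQ True
      by (metis coeff_mult_degree_sum dc_def mult_1)
    then show ?thesis using assms(3) True unfolding dc_def by simp
  next
    case False
    then have "degree X < K" using assms(3) dY unfolding dc_def by simp
    then show ?thesis using assms(3) dY unfolding dc_def by (simp add: coeff_eq_0)
  qed
qed

lemma interp:
  fixes \<xi> :: "nat \<Rightarrow> complex"
  assumes N: "N \<ge> 1" and inj: "inj_on \<xi> {1..N}" and B: "dc B N T"
    and v: "\<And>a. a \<in> {1..N} \<Longrightarrow> (\<Prod>b\<in>{1..N}. \<Prod>r\<in>{1..<m}. 1 / (\<xi> a - \<xi> b + of_nat r * \<eta>)) * v a = poly B (\<xi> a)"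
  shows "T * dpol N \<xi> z + (\<Sum>a\<in>{1..N}. fint \<eta> N \<xi> m a z * v a) = poly B z"
proof -
  have "(\<Sum>a\<in>{1..N}. fint \<eta> N \<xi> m a z * v a) = (\<Sum>a\<in>{1..N}. (\<Prod>b\<in>{1..N}-{a}. (z - \<xi> b)/(\<xi> a - \<xi> b)) * poly B (\<xi> a))"
    by (intro sum.cong refl) (simp add: fint_def v[symmetric] mult.assoc)
  then show ?thesis using lagrange[OF N inj B, of z] by simp
qed

lemma cfact:
  "(\<Prod>b\<in>{1..N}. \<Prod>r\<in>{1..<m}. 1 / (\<xi> a - \<xi> b + of_nat r * \<eta>)) = 1 / (\<Prod>r\<in>{1..<m}. dpol N \<xi> (\<xi> a + of_nat r * \<eta>))"
proof -
  have "(\<Prod>b\<in>{1..N}. \<Prod>r\<in>{1..<m}. 1 / (\<xi> a - \<xi> b + of_nat r * \<eta>))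
      = (\<Prod>r\<in>{1..<m}. \<Prod>b\<in>{1..N}. 1 / (\<xi> a + of_nat r * \<eta> - \<xi> b))"
    by (subst prod.swap) (simp add: algebra_simps)
  also have "\<dots> = 1 / (\<Prod>r\<in>{1..<m}. dpol N \<xi> (\<xi> a + of_nat r * \<eta>))"
    unfolding dpol_def by (simp add: prod_dividef)
  finally show ?thesis .
qed

lemma shiftprod: "(\<Prod>r\<in>{1..Suc m}. h r) = h (1::nat) * (\<Prod>r\<in>{1..m}. h (Suc r))"
proof -
  have "(\<Prod>r\<in>{1..Suc m}. h r) = h 1 * (\<Prod>r\<in>{Suc 1..Suc m}. h r)"
    by (rule prod.atLeast_Suc_atMost) simp
  also have "(\<Prod>r\<in>{Suc 1..Suc m}. h r) = (\<Prod>r\<in>{1..m}. h (Suc r))"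
    by (rule prod.shift_bounds_cl_Suc_ivl)
  finally show ?thesis .
qed

theorem lemmaA1:
  fixes \<eta> k1 k2 k3 :: complex and N L M :: nat and \<xi> lam mu :: "nat \<Rightarrow> complex"
  assumes eta: "\<eta> \<noteq> 0"
    and N: "N \<ge> 1"
    and xi: "\<And>a b (z::int). a \<in> {1..N} \<Longrightarrow> b \<in> {1..N} \<Longrightarrow> a \<noteq> b \<Longrightarrow> \<xi> a - \<xi> b \<noteq> of_int z * \<eta>"
    and k: "k1 \<noteq> 0" "k2 \<noteq> 0" "k3 \<noteq> 0"
    and bethe1: "\<And>j. j \<in> {1..L} \<Longrightarrow>
       k1 * Qpol M mu (lam j) * apol \<eta> N \<xi> (lam j) = k2 * dpol N \<xi> (lam j) * Qpol M mu (lam j + \<eta>)"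
    and bethe2: "\<And>j. j \<in> {1..M} \<Longrightarrow>
       k2 * Qpol M mu (mu j + \<eta>) * Qpol L lam (mu j - \<eta>) = - k3 * Qpol M mu (mu j - \<eta>) * Qpol L lam (mu j)"
    and dlam: "inj_on lam {1..L}"
    and dmu: "inj_on mu {1..M}"
    and dmulam: "\<And>q m. q \<in> {1..M} \<Longrightarrow> m \<in> {1..L} \<Longrightarrow> mu q \<noteq> lam m"
    and muxi: "\<And>h n. h \<in> {1..M} \<Longrightarrow> n \<in> {1..N} \<Longrightarrow> mu h \<noteq> \<xi> n"
    and x: "\<And>a. x a = t1Bethe \<eta> N \<xi> k1 k2 k3 L lam M mu (\<xi> a)"
  shows "(\<forall>z. Qpol L lam z \<noteq> 0 \<and> Qpol L lam (z + \<eta>) \<noteq> 0 \<and> Qpol M mu (z + \<eta>) \<noteq> 0 \<longrightarrow>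
            tint \<eta> N \<xi> k1 k2 k3 x 2 z
              = Lam1 \<eta> N \<xi> k1 L lam z * (k1 * t1Bethe \<eta> N \<xi> k1 k2 k3 L lam M mu (z + \<eta>) + k2 * k3 * dpol N \<xi> z) / k1
          \<and> tint \<eta> N \<xi> k1 k2 k3 x 2 z
              = Lam1 \<eta> N \<xi> k1 L lam z * (Lam1 \<eta> N \<xi> k1 L lam (z + \<eta>) - Lam2 \<eta> N \<xi> k2 L lam M mu (z + \<eta>)
                  - Lam3 \<eta> N \<xi> k3 M mu (z + \<eta>) + k2 * k3 * dpol N \<xi> z / k1))
       \<and> (\<forall>n\<ge>2. \<forall>z. Qpol L lam z \<noteq> 0 \<longrightarrow>
            tint \<eta> N \<xi> k1 k2 k3 x (Suc n) z = Lam1 \<eta> N \<xi> k1 L lam z * tint \<eta> N \<xi> k1 k2 k3 x n (z + \<eta>))"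
proof -
  define sh :: "complex poly \<Rightarrow> complex \<Rightarrow> complex poly" where "sh p c = pcompose p [:c,1:]" for p c
  have psh: "poly (sh p c) w = poly p (w + c)" for p c w unfolding sh_def by (simp add: poly_pcompose add.commute)
  define dP where "dP = (\<Prod>n\<in>{1..N}. [:-\<xi> n,1:])"
  define Q1P where "Q1P = (\<Prod>n\<in>{1..L}. [:-lam n,1:])"
  define Q2P where "Q2P = (\<Prod>n\<in>{1..M}. [:-mu n,1:])"
  have pd: "poly dP w = dpol N \<xi> w" for w unfolding dP_def by (rule poly_dP)
  have pq1: "poly Q1P w = Qpol L lam w" for w unfolding Q1P_def Qpol_def by (simp add: poly_prod)
  have pq2: "poly Q2P w = Qpol M mu w" for w unfolding Q2P_def Qpol_def by (simp add: poly_prod)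
  have dcd: "dc dP N 1" unfolding dP_def using dc_prod[of "{1..N}" "\<lambda>n. -\<xi> n"] by simp
  have dcq1: "dc Q1P L 1" unfolding Q1P_def using dc_prod[of "{1..L}" "\<lambda>n. -lam n"] by simp
  have dcq2: "dc Q2P M 1" unfolding Q2P_def using dc_prod[of "{1..M}" "\<lambda>n. -mu n"] by simp
  have dsh: "dc p D c \<Longrightarrow> dc (sh p s) D c" for p D c s unfolding sh_def by (rule dc_pcomp)
  have Q1roots: "Q1P = (\<Prod>s\<in>lam ` {1..L}. [:-s,1:])" unfolding Q1P_def using prod.reindex[OF dlam, of "\<lambda>s. [:-s,1:]"] by simp
  have Q2roots: "Q2P = (\<Prod>s\<in>mu ` {1..M}. [:-s,1:])" unfolding Q2P_def using prod.reindex[OF dmu, of "\<lambda>s. [:-s,1:]"] by simp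
  have injxi: "inj_on \<xi> {1..N}"
  proof (rule inj_onI)
    fix a b assume "a \<in> {1..N}" "b \<in> {1..N}" "\<xi> a = \<xi> b"
    then show "a = b" using xi[of a b 0] by auto
  qed
  have dxi: "dpol N \<xi> (\<xi> a) = 0" if "a \<in> {1..N}" for a
    unfolding dpol_def using that by (intro prod_zero) auto
  have X1: "dpol N \<xi> (\<xi> a + of_nat r * \<eta>) \<noteq> 0" if "a \<in> {1..N}" "r \<ge> 1" for a r
  proof
    assume "dpol N \<xi> (\<xi> a + of_nat r * \<eta>) = 0"
    then obtain b where b: "b \<in> {1..N}" "\<xi> a + of_nat r * \<eta> - \<xi> b = 0" unfolding dpol_def by auto
    show False
    proof (cases "b = a")
      case True
      then show False using b eta that by simp
    next
      case False
      then show False using xi[of b a "int r"] b that by (simp add: algebra_simps)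
    qed
  qed
  have X1a: "apol \<eta> N \<xi> (\<xi> a) \<noteq> 0" if "a \<in> {1..N}" for a
    unfolding apol_def using X1[OF that, of 1] by simp
  have X3: "Qpol M mu (\<xi> a) \<noteq> 0" if "a \<in> {1..N}" for a
    unfolding Qpol_def using muxi that by force
  have X2: "Qpol L lam (\<xi> a) \<noteq> 0" if "a \<in> {1..N}" for a
  proof
    assume "Qpol L lam (\<xi> a) = 0"
    then obtain j where j: "j \<in> {1..L}" "lam j = \<xi> a" unfolding Qpol_def by auto
    have "k1 * Qpol M mu (\<xi> a) * apol \<eta> N \<xi> (\<xi> a) = 0"
      using bethe1[OF j(1)] j(2) dxi[OF that] by simp
    then show False using k X3[OF that] X1a[OF that] by simp
  qed
  have X4: "Qpol L lam (mu m) \<noteq> 0" if "m \<in> {1..M}" for m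
    unfolding Qpol_def using dmulam that by auto
  have X5: "Qpol M mu (lam j + \<eta>) \<noteq> 0" if "j \<in> {1..L}" for j
  proof
    assume "Qpol M mu (lam j + \<eta>) = 0"
    then obtain m where m: "m \<in> {1..M}" "mu m = lam j + \<eta>" unfolding Qpol_def by auto
    have "k1 * Qpol M mu (lam j) * apol \<eta> N \<xi> (lam j) = 0"
      using bethe1[OF that] \<open>Qpol M mu (lam j + \<eta>) = 0\<close> by simp
    moreover have "Qpol M mu (lam j) \<noteq> 0" unfolding Qpol_def using dmulam that by fastforce
    ultimately have "dpol N \<xi> (lam j + \<eta>) = 0" using k unfolding apol_def by simp
    then obtain n where "n \<in> {1..N}" "lam j + \<eta> = \<xi> n" unfolding dpol_def by auto
    then show False using muxi[OF m(1)] m(2) by force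
  qed
  define SR where "SR = smult k1 (sh dP \<eta> * Q2P) - smult k2 (dP * sh Q2P \<eta>)"
  have pSR: "poly SR w = k1 * apol \<eta> N \<xi> w * Qpol M mu w - k2 * dpol N \<xi> w * Qpol M mu (w + \<eta>)" for w
    unfolding SR_def by (simp add: psh pd pq2 apol_def)
  have "Q1P dvd SR" unfolding Q1roots
  proof (rule roots_dvd)
    fix s assume "s \<in> lam ` {1..L}"
    then obtain j where j: "j \<in> {1..L}" "s = lam j" by auto
    then have "poly SR s = k1 * Qpol M mu (lam j) * apol \<eta> N \<xi> (lam j) - k2 * dpol N \<xi> (lam j) * Qpol M mu (lam j + \<eta>)"
      using pSR by (simp add: mult_ac)
    then show "poly SR s = 0" using bethe1[OF j(1)] by simp
  qed simp
  then obtain R where SRR: "SR = Q1P * R" by (elim dvdE)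
  have dcSR: "dc SR (N+M) (k1*(1*1) - k2*(1*1))" unfolding SR_def
    by (intro dc_diff dc_smult dc_mult dsh dcd dcq2)
  define E where "E = sh Q1P (-\<eta>) * R - smult k3 (dP * sh Q2P (-\<eta>))"
  have pE: "poly E w = Qpol L lam (w - \<eta>) * poly R w - k3 * dpol N \<xi> w * Qpol M mu (w - \<eta>)" for w
    unfolding E_def by (simp add: psh pd pq1 pq2)
  have pR: "Qpol L lam w * poly R w = k1 * apol \<eta> N \<xi> w * Qpol M mu w - k2 * dpol N \<xi> w * Qpol M mu (w + \<eta>)" for w
    using pSR[of w] unfolding SRR by (simp add: pq1)
  have "Q2P dvd E" unfolding Q2roots
  proof (rule roots_dvd)
    fix s assume "s \<in> mu ` {1..M}"
    then obtain m where m: "m \<in> {1..M}" "s = mu m" by auto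
    have z: "Qpol M mu (mu m) = 0" unfolding Qpol_def using m by (intro prod_zero) auto
    have "Qpol L lam (mu m) * poly E (mu m) = Qpol L lam (mu m - \<eta>) * (Qpol L lam (mu m) * poly R (mu m)) - k3 * dpol N \<xi> (mu m) * Qpol M mu (mu m - \<eta>) * Qpol L lam (mu m)"
      unfolding pE by (simp add: algebra_simps)
    also have "\<dots> = - dpol N \<xi> (mu m) * (k2 * Qpol M mu (mu m + \<eta>) * Qpol L lam (mu m - \<eta>) + k3 * Qpol M mu (mu m - \<eta>) * Qpol L lam (mu m))"
      unfolding pR z by (simp add: algebra_simps)
    also have "\<dots> = 0" using bethe2[OF m(1)] by simp
    finally show "poly E s = 0" using X4[OF m(1)] m by simp
  qed simp
  then obtain P where EP: "E = Q2P * P" by (elim dvdE)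
  have eqQE: "Q1P * E = sh Q1P (-\<eta>) * SR - smult k3 (Q1P * (dP * sh Q2P (-\<eta>)))"
    unfolding E_def SRR by (simp add: algebra_simps)
  have "dc (Q1P * E) (L+(N+M)) (1*(k1*(1*1) - k2*(1*1)) - k3*(1*(1*1)))"
    unfolding eqQE by (intro dc_diff dc_smult dc_mult dsh dcd dcq2 dcq1 dcSR)
  moreover have "L+(N+M) = (L+M)+N" "1*(k1*(1*1) - k2*(1*1)) - k3*(1*(1*1)) = k1 - k2 - k3" by simp_all
  ultimately have "dc (Q1P * E) ((L+M)+N) (k1 - k2 - k3)" by (simp only:)
  moreover have "(Q1P * Q2P) * P = Q1P * E" unfolding EP by (simp add: algebra_simps)
  moreover have "dc (Q1P * Q2P) (L+M) 1" using dc_mult[OF dcq1 dcq2] by simp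
  ultimately have dcP: "dc P N (k1 - k2 - k3)" using dc_div by blast
  have PV: "poly P w = t1Bethe \<eta> N \<xi> k1 k2 k3 L lam M mu w" if "Qpol L lam w \<noteq> 0" "Qpol M mu w \<noteq> 0" for w
  proof -
    define q1 where "q1 = Qpol L lam w"
    define q2 where "q2 = Qpol M mu w"
    have e: "poly P w * (q1 * q2) = q1 * poly E w" unfolding EP q1_def q2_def by (simp add: pq2 mult_ac)
    also have "\<dots> = Qpol L lam (w - \<eta>) * (q1 * poly R w) - k3 * dpol N \<xi> w * Qpol M mu (w - \<eta>) * q1"
      unfolding pE by (simp add: algebra_simps)
    also have "\<dots> = Qpol L lam (w - \<eta>) * (k1 * apol \<eta> N \<xi> w * q2 - k2 * dpol N \<xi> w * Qpol M mu (w + \<eta>)) - k3 * dpol N \<xi> w * Qpol M mu (w - \<eta>) * q1"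
      unfolding q1_def q2_def pR ..
    also have "\<dots> = t1Bethe \<eta> N \<xi> k1 k2 k3 L lam M mu w * (q1 * q2)"
      unfolding t1Bethe_def Lam1_def Lam2_def Lam3_def using that unfolding q1_def[symmetric] q2_def[symmetric]
      by (simp add: field_simps)
    finally show ?thesis using that unfolding q1_def q2_def by simp
  qed
  have xa: "x a = k1 * apol \<eta> N \<xi> (\<xi> a) * Qpol L lam (\<xi> a - \<eta>) / Qpol L lam (\<xi> a)" if "a \<in> {1..N}" for a
    unfolding x t1Bethe_def Lam1_def Lam2_def Lam3_def using dxi[OF that] by simp
  have xP: "x a = poly P (\<xi> a)" if "a \<in> {1..N}" for a
    using PV[OF X2[OF that] X3[OF that]] x by simp
  have t1: "tint \<eta> N \<xi> k1 k2 k3 x 1 w = poly P w" for w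
  proof -
    have "tint \<eta> N \<xi> k1 k2 k3 x 1 w = Tinf k1 k2 k3 1 * dpol N \<xi> w + (\<Sum>a\<in>{1..N}. fint \<eta> N \<xi> 1 a w * x a)"
      by simp
    also have "\<dots> = poly P w"
      by (rule interp[OF N injxi]) (use dcP xP in \<open>auto simp: Tinf_def\<close>)
    finally show ?thesis .
  qed
  define G where "G = smult k1 (sh P \<eta>) + smult (k2*k3) dP"
  have pG: "poly G w = k1 * poly P (w + \<eta>) + k2 * k3 * dpol N \<xi> w" for w
    unfolding G_def by (simp add: psh pd)
  have "Q1P dvd G" unfolding Q1roots
  proof (rule roots_dvd)
    fix s assume "s \<in> lam ` {1..L}"
    then obtain j where j: "j \<in> {1..L}" "s = lam j" by auto
    have z: "Qpol L lam (lam j) = 0" unfolding Qpol_def using j by (intro prod_zero) auto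
    have e: "Qpol M mu (lam j + \<eta>) * poly P (lam j + \<eta>) = poly E (lam j + \<eta>)"
      unfolding EP by (simp add: pq2)
    have "Qpol M mu (lam j + \<eta>) * poly G (lam j)
        = k1 * poly E (lam j + \<eta>) + k2 * k3 * dpol N \<xi> (lam j) * Qpol M mu (lam j + \<eta>)"
      unfolding pG e[symmetric] by (simp add: algebra_simps)
    also have "\<dots> = - k3 * (k1 * Qpol M mu (lam j) * apol \<eta> N \<xi> (lam j) - k2 * dpol N \<xi> (lam j) * Qpol M mu (lam j + \<eta>))"
      unfolding pE using z by (simp add: algebra_simps apol_def)
    also have "\<dots> = 0" using bethe1[OF j(1)] by simp
    finally show "poly G s = 0" using X5[OF j(1)] j by simp
  qed simp
  then obtain C where GC: "G = Q1P * C" by (elim dvdE)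
  have pC: "Qpol L lam w * poly C w = k1 * poly P (w + \<eta>) + k2 * k3 * dpol N \<xi> w" for w
    using pG[of w] unfolding GC by (simp add: pq1)
  have dcG: "dc G N (k1 * (k1 - k2 - k3) + (k2 * k3) * 1)" unfolding G_def
    by (intro dc_add dc_smult dsh dcP dcd)
  define B where "B n = smult (k1^(n-2)) (sh Q1P (-\<eta>) * sh C (of_nat (n-2) * \<eta>))" for n
  have pB: "poly (B n) w = k1^(n-2) * Qpol L lam (w - \<eta>) * poly C (w + of_nat (n-2) * \<eta>)" for n w
    unfolding B_def by (simp add: psh pq1)
  have dcB: "dc (B n) N (Tinf k1 k2 k3 n)" if "n \<ge> 2" for n
  proof -
    define s where "s = (of_nat (n-2) * \<eta> :: complex)"
    have "sh G s = sh Q1P s * sh C s" unfolding sh_def GC by (simp add: pcompose_mult)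
    moreover have "dc (sh G s) N (k1 * (k1 - k2 - k3) + (k2 * k3) * 1)" by (rule dsh[OF dcG])
    ultimately have "dc (sh Q1P (-\<eta>) * sh C s) N (k1 * (k1 - k2 - k3) + (k2 * k3) * 1)"
      using dc_cancel[OF _ dsh[OF dcq1] _ dsh[OF dcq1]] by metis
    then have "dc (B n) N (k1^(n-2) * (k1 * (k1 - k2 - k3) + (k2 * k3) * 1))"
      unfolding B_def s_def by (rule dc_smult)
    moreover have "k1^(n-2) * (k1 * (k1 - k2 - k3) + (k2 * k3) * 1) = Tinf k1 k2 k3 n"
      using that unfolding Tinf_def by (simp add: algebra_simps)
    ultimately show ?thesis by simp
  qed
  have tS: "tint \<eta> N \<xi> k1 k2 k3 x (Suc n) w = (\<Prod>r\<in>{1..n}. dpol N \<xi> (w + of_nat r * \<eta>)) *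
     (Tinf k1 k2 k3 (Suc n) * dpol N \<xi> w +
      (\<Sum>a\<in>{1..N}. fint \<eta> N \<xi> (Suc n) a w * (tint \<eta> N \<xi> k1 k2 k3 x n (\<xi> a + \<eta>) * x a)))"
    if "n \<ge> 1" for n w
    using that by (cases n) (simp_all add: mult.assoc)
  have t1S: "tint \<eta> N \<xi> k1 k2 k3 x (Suc 0) w = poly P w" for w using t1[of w] by simp
  have nz: "(\<Prod>r\<in>{1..m}. dpol N \<xi> (\<xi> a + of_nat (Suc r) * \<eta>)) \<noteq> 0" if "a \<in> {1..N}" for a m
    using X1[OF that] by (simp add: prod_zero_iff del: of_nat_Suc)
  have main: "\<forall>w. tint \<eta> N \<xi> k1 k2 k3 x (Suc (Suc k)) w =
      (\<Prod>r\<in>{1..Suc k}. dpol N \<xi> (w + of_nat r * \<eta>)) * poly (B (Suc (Suc k))) w" for k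
  proof (induction k)
    case 0
    show ?case
    proof
      fix w
      have "tint \<eta> N \<xi> k1 k2 k3 x (Suc (Suc 0)) w = (\<Prod>r\<in>{1..Suc 0}. dpol N \<xi> (w + of_nat r * \<eta>)) *
          (Tinf k1 k2 k3 (Suc (Suc 0)) * dpol N \<xi> w +
          (\<Sum>a\<in>{1..N}. fint \<eta> N \<xi> (Suc (Suc 0)) a w * (tint \<eta> N \<xi> k1 k2 k3 x (Suc 0) (\<xi> a + \<eta>) * x a)))"
        by (rule tS) simp
      also have "(Tinf k1 k2 k3 (Suc (Suc 0)) * dpol N \<xi> w +
          (\<Sum>a\<in>{1..N}. fint \<eta> N \<xi> (Suc (Suc 0)) a w * (tint \<eta> N \<xi> k1 k2 k3 x (Suc 0) (\<xi> a + \<eta>) * x a)))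
          = poly (B (Suc (Suc 0))) w"
      proof (rule interp[OF N injxi dcB])
        fix a assume a: "a \<in> {1..N}"
        have ap: "apol \<eta> N \<xi> (\<xi> a) = dpol N \<xi> (\<xi> a + \<eta>)" unfolding apol_def ..
        have cq: "Qpol L lam (\<xi> a) * poly C (\<xi> a) = k1 * poly P (\<xi> a + \<eta>)"
          using pC[of "\<xi> a"] dxi[OF a] by simp
        show "(\<Prod>b\<in>{1..N}. \<Prod>r\<in>{1..<Suc (Suc 0)}. 1 / (\<xi> a - \<xi> b + of_nat r * \<eta>)) *
           (tint \<eta> N \<xi> k1 k2 k3 x (Suc 0) (\<xi> a + \<eta>) * x a) = poly (B (Suc (Suc 0))) (\<xi> a)"
          unfolding cfact t1S xa[OF a] pB using X2[OF a] X1a[OF a] cq unfolding ap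
          by (simp add: field_simps)
      qed simp
      finally show "tint \<eta> N \<xi> k1 k2 k3 x (Suc (Suc 0)) w =
          (\<Prod>r\<in>{1..Suc 0}. dpol N \<xi> (w + of_nat r * \<eta>)) * poly (B (Suc (Suc 0))) w" .
    qed
  next
    case (Suc k)
    show ?case
    proof
      fix w
      define n where "n = Suc (Suc k)"
      have "tint \<eta> N \<xi> k1 k2 k3 x (Suc n) w = (\<Prod>r\<in>{1..n}. dpol N \<xi> (w + of_nat r * \<eta>)) *
          (Tinf k1 k2 k3 (Suc n) * dpol N \<xi> w +
          (\<Sum>a\<in>{1..N}. fint \<eta> N \<xi> (Suc n) a w * (tint \<eta> N \<xi> k1 k2 k3 x n (\<xi> a + \<eta>) * x a)))"
        by (rule tS) (simp add: n_def)
      also have "(Tinf k1 k2 k3 (Suc n) * dpol N \<xi> w +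
          (\<Sum>a\<in>{1..N}. fint \<eta> N \<xi> (Suc n) a w * (tint \<eta> N \<xi> k1 k2 k3 x n (\<xi> a + \<eta>) * x a)))
          = poly (B (Suc n)) w"
      proof (rule interp[OF N injxi dcB])
        fix a assume a: "a \<in> {1..N}"
        have ap: "apol \<eta> N \<xi> (\<xi> a) = dpol N \<xi> (\<xi> a + \<eta>)" unfolding apol_def ..
        define Pi where "Pi = (\<Prod>r\<in>{1..Suc k}. dpol N \<xi> (\<xi> a + of_nat (Suc r) * \<eta>))"
        have Pi0: "Pi \<noteq> 0" unfolding Pi_def by (rule nz[OF a])
        have sp: "(\<Prod>r\<in>{1..<Suc n}. dpol N \<xi> (\<xi> a + of_nat r * \<eta>)) = dpol N \<xi> (\<xi> a + \<eta>) * Pi"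
        proof -
          have "{1..<Suc n} = {1..Suc (Suc k)}" unfolding n_def by auto
          then show ?thesis unfolding Pi_def by (simp only: shiftprod) simp
        qed
        have ih: "tint \<eta> N \<xi> k1 k2 k3 x n (\<xi> a + \<eta>) = Pi * poly (B n) (\<xi> a + \<eta>)"
        proof -
          have "tint \<eta> N \<xi> k1 k2 k3 x n (\<xi> a + \<eta>) = (\<Prod>r\<in>{1..Suc k}. dpol N \<xi> (\<xi> a + \<eta> + of_nat r * \<eta>)) * poly (B n) (\<xi> a + \<eta>)"
            unfolding n_def by (rule spec[OF Suc.IH])
          moreover have "(\<Prod>r\<in>{1..Suc k}. dpol N \<xi> (\<xi> a + \<eta> + of_nat r * \<eta>)) = Pi"
            unfolding Pi_def by (intro prod.cong refl) (simp add: algebra_simps)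
          ultimately show ?thesis by simp
        qed
        have bn: "poly (B n) (\<xi> a + \<eta>) = k1^k * Qpol L lam (\<xi> a) * poly C (\<xi> a + \<eta> + of_nat k * \<eta>)"
          unfolding pB n_def by simp
        have bs: "poly (B (Suc n)) (\<xi> a) = k1^(Suc k) * Qpol L lam (\<xi> a - \<eta>) * poly C (\<xi> a + \<eta> + of_nat k * \<eta>)"
          unfolding pB n_def by (simp add: algebra_simps)
        show "(\<Prod>b\<in>{1..N}. \<Prod>r\<in>{1..<Suc n}. 1 / (\<xi> a - \<xi> b + of_nat r * \<eta>)) *
           (tint \<eta> N \<xi> k1 k2 k3 x n (\<xi> a + \<eta>) * x a) = poly (B (Suc n)) (\<xi> a)"
          unfolding cfact sp ih bn bs xa[OF a] using X2[OF a] X1a[OF a] Pi0 unfolding ap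
          by (simp add: field_simps)
      qed (simp add: n_def)
      finally show "tint \<eta> N \<xi> k1 k2 k3 x (Suc (Suc (Suc k))) w =
          (\<Prod>r\<in>{1..Suc (Suc k)}. dpol N \<xi> (w + of_nat r * \<eta>)) * poly (B (Suc (Suc (Suc k)))) w"
        unfolding n_def by simp
    qed
  qed
  have C1: "Qpol L lam w \<noteq> 0 \<Longrightarrow> poly C w = (k1 * poly P (w + \<eta>) + k2 * k3 * dpol N \<xi> w) / Qpol L lam w" for w
    using pC[of w] by (simp add: field_simps)
  have part1: "tint \<eta> N \<xi> k1 k2 k3 x 2 z
              = Lam1 \<eta> N \<xi> k1 L lam z * (k1 * t1Bethe \<eta> N \<xi> k1 k2 k3 L lam M mu (z + \<eta>) + k2 * k3 * dpol N \<xi> z) / k1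
          \<and> tint \<eta> N \<xi> k1 k2 k3 x 2 z
              = Lam1 \<eta> N \<xi> k1 L lam z * (Lam1 \<eta> N \<xi> k1 L lam (z + \<eta>) - Lam2 \<eta> N \<xi> k2 L lam M mu (z + \<eta>)
                  - Lam3 \<eta> N \<xi> k3 M mu (z + \<eta>) + k2 * k3 * dpol N \<xi> z / k1)"
    if h: "Qpol L lam z \<noteq> 0" "Qpol L lam (z + \<eta>) \<noteq> 0" "Qpol M mu (z + \<eta>) \<noteq> 0" for z
  proof -
    have t2: "tint \<eta> N \<xi> k1 k2 k3 x 2 z = dpol N \<xi> (z + \<eta>) * (Qpol L lam (z - \<eta>) * poly C z)"
      using spec[OF main[of 0], of z] by (simp add: numeral_2_eq_2 pB)
    have pt: "poly P (z + \<eta>) = t1Bethe \<eta> N \<xi> k1 k2 k3 L lam M mu (z + \<eta>)" using PV h(2,3) by simp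
    have e1: "tint \<eta> N \<xi> k1 k2 k3 x 2 z
              = Lam1 \<eta> N \<xi> k1 L lam z * (k1 * t1Bethe \<eta> N \<xi> k1 k2 k3 L lam M mu (z + \<eta>) + k2 * k3 * dpol N \<xi> z) / k1"
      unfolding t2 C1[OF h(1)] pt[symmetric] Lam1_def apol_def using h(1) k by (simp add: field_simps)
    have "(k1 * t1Bethe \<eta> N \<xi> k1 k2 k3 L lam M mu (z + \<eta>) + k2 * k3 * dpol N \<xi> z) / k1
       = Lam1 \<eta> N \<xi> k1 L lam (z + \<eta>) - Lam2 \<eta> N \<xi> k2 L lam M mu (z + \<eta>)
                  - Lam3 \<eta> N \<xi> k3 M mu (z + \<eta>) + k2 * k3 * dpol N \<xi> z / k1"
      unfolding t1Bethe_def using k by (simp add: field_simps)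
    note q = this
    have e2: "tint \<eta> N \<xi> k1 k2 k3 x 2 z
              = Lam1 \<eta> N \<xi> k1 L lam z * ((k1 * t1Bethe \<eta> N \<xi> k1 k2 k3 L lam M mu (z + \<eta>) + k2 * k3 * dpol N \<xi> z) / k1)"
      using e1 by (simp only: times_divide_eq_right)
    show ?thesis using e1 e2[unfolded q] by (rule conjI)
  qed
  have part2: "tint \<eta> N \<xi> k1 k2 k3 x (Suc n) z = Lam1 \<eta> N \<xi> k1 L lam z * tint \<eta> N \<xi> k1 k2 k3 x n (z + \<eta>)"
    if n: "n \<ge> 2" and h: "Qpol L lam z \<noteq> 0" for n z
  proof -
    obtain k where kk: "n = Suc (Suc k)" using n by (metis add_2_eq_Suc le_Suc_ex)
    define Pi where "Pi = (\<Prod>r\<in>{1..Suc k}. dpol N \<xi> (z + \<eta> + of_nat r * \<eta>))"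
    have a: "tint \<eta> N \<xi> k1 k2 k3 x (Suc n) z = (\<Prod>r\<in>{1..Suc (Suc k)}. dpol N \<xi> (z + of_nat r * \<eta>)) * poly (B (Suc n)) z"
      unfolding kk by (rule spec[OF main])
    have sp: "(\<Prod>r\<in>{1..Suc (Suc k)}. dpol N \<xi> (z + of_nat r * \<eta>)) = dpol N \<xi> (z + \<eta>) * Pi"
      unfolding shiftprod Pi_def by (simp add: algebra_simps)
    have b: "tint \<eta> N \<xi> k1 k2 k3 x n (z + \<eta>) = Pi * poly (B n) (z + \<eta>)"
      unfolding kk Pi_def by (rule spec[OF main])
    have bn: "poly (B n) (z + \<eta>) = k1^k * Qpol L lam z * poly C (z + \<eta> + of_nat k * \<eta>)"
      unfolding pB kk by simp
    have bs: "poly (B (Suc n)) z = k1^(Suc k) * Qpol L lam (z - \<eta>) * poly C (z + \<eta> + of_nat k * \<eta>)"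
      unfolding pB kk by (simp add: algebra_simps)
    show ?thesis unfolding a sp b bn bs Lam1_def apol_def using h by (simp add: field_simps)
  qed
  show ?thesis using part1 part2 by blast
qed
end
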